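(* A relation $R\subseteq\{0,1\}^V$ is a delta matroid if and only if its indicator signature is terraced.
   Context: $R$ is a delta matroid if for all $x,y\in R$ and all $i$ with $x_i\ne y_i$ there exists $j$ with $x_j\ne y_j$ (possibly $j=i$) such that $x^{\{i,j\}}\in R$, where $x^U$ denotes $x$ with the coordinates in $U$ flipped. A partial configuration $p$ of $V$ is an element of $\{0,1\}^{\mathrm{dom}(p)}$ with $\mathrm{dom}(p)\subseteq V$, and the pinning of a signature $F$ on $V$ is $F_p(x)=F(x,p)$ on $V\setminus\mathrm{dom}(p)$; $p^{\{i\}}$ is $p$ with coordinate $i$ flipped. A signature $F:\{0,1\}^V\to\mathbb R_{\ge0}$ is terraced if for every partial configuration $p$ of $V$ and all $i,j\in\mathrm{dom}(p)$: if $F_p$ is identically zero then $F_{p^{\{i\}}}$ and $F_{p^{\{j\}}}$ are linearly dependent (one is a scalar multiple of the other). *)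

theory Defs
  imports Complex_Main
begin

text \<open>Configurations in {0,1}^V are represented as subsets x of V
  (x = set of coordinates equal to 1). Flipping the coordinates in U is
  symmetric difference.\<close>

definition flip :: "'a set \<Rightarrow> 'a set \<Rightarrow> 'a set" where
  "flip x U = (x - U) \<union> (U - x)"

definition delta_matroid :: "'a set set \<Rightarrow> bool" where
  "delta_matroid R \<longleftrightarrow>
     (\<forall>x\<in>R. \<forall>y\<in>R. \<forall>i. (i \<in> x) \<noteq> (i \<in> y) \<longrightarrow>
        (\<exists>j. (j \<in> x) \<noteq> (j \<in> y) \<and> flip x {i, j} \<in> R))"

text \<open>A partial configuration p is a pair (D, P) with D = dom p \<subseteq> V and
  P \<subseteq> D the coordinates of D set to 1. The pinning F_p is the function
  y \<mapsto> F (y \<union> P) on configurations y \<subseteq> V - D.\<close>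

definition pinning :: "('a set \<Rightarrow> real) \<Rightarrow> 'a set \<Rightarrow> 'a set \<Rightarrow> real" where
  "pinning F P = (\<lambda>y. F (y \<union> P))"

definition lin_dep_on :: "'a set set \<Rightarrow> ('a set \<Rightarrow> real) \<Rightarrow> ('a set \<Rightarrow> real) \<Rightarrow> bool" where
  "lin_dep_on S G H \<longleftrightarrow>
     (\<exists>c::real. (\<forall>y\<in>S. G y = c * H y) \<or> (\<forall>y\<in>S. H y = c * G y))"

definition terraced :: "'a set \<Rightarrow> ('a set \<Rightarrow> real) \<Rightarrow> bool" where
  "terraced V F \<longleftrightarrow>
     (\<forall>D P. D \<subseteq> V \<longrightarrow> P \<subseteq> D \<longrightarrow>
       (\<forall>i\<in>D. \<forall>j\<in>D.
          (\<forall>y\<in>Pow (V - D). pinning F P y = 0) \<longrightarrow>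
          lin_dep_on (Pow (V - D)) (pinning F (flip P {i})) (pinning F (flip P {j}))))"

definition indicator_sig :: "'a set set \<Rightarrow> 'a set \<Rightarrow> real" where
  "indicator_sig R x = (if x \<in> R then 1 else 0)"

end

theory Submission
  imports Defs
begin

lemma flip_mem: "k \<in> flip x U \<longleftrightarrow> (k \<in> x) \<noteq> (k \<in> U)"
  unfolding flip_def by blast

lemma dm_claim:
  assumes dm: "delta_matroid R" and RV: "R \<subseteq> Pow V"
    and D: "D \<subseteq> V" "P \<subseteq> D" "i\<in>D" "j\<in>D" "i\<noteq>j"
    and zero: "\<forall>y\<in>Pow(V-D). y \<union> P \<notin> R"
    and a: "a \<subseteq> V-D" "a \<union> flip P {i} \<in> R"
    and b: "b \<subseteq> V - D" "b \<union> flip P {j} \<in> R"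
  shows "a \<union> flip P {j} \<in> R"
proof -
  define x where "x = a \<union> flip P {i}"
  define y where "y = b \<union> flip P {j}"
  have iaD: "i \<notin> a" "i \<notin> b" "j \<notin> a" "j \<notin> b" using a b D by auto
  have "(i\<in>x) \<noteq> (i\<in>y)" using D iaD unfolding x_def y_def by (simp add: flip_mem)
  then obtain k where k: "(k\<in>x)\<noteq>(k\<in>y)" "flip x {i,k} \<in> R"
    using dm a(2) b(2) unfolding delta_matroid_def x_def[symmetric] y_def[symmetric] by blast
  have xV: "x \<subseteq> V" "y \<subseteq> V" using RV a b unfolding x_def y_def by auto
  consider "k = i" | "k \<notin> D" | "k \<in> D" "k\<noteq>i" by blast
  then show ?thesis
  proof cases
    case 1
    have "flip x {i,k} = a \<union> P" unfolding set_eq_iff x_def using 1 a D(3) by (auto simp: flip_mem)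
    then show ?thesis using zero a k by auto
  next
    case 2
    have kV: "k \<in> V" using k xV by auto
    have "flip x {i,k} = flip a {k} \<union> P" unfolding set_eq_iff x_def using 2 a D by (auto simp: flip_mem)
    moreover have "flip a {k} \<in> Pow (V-D)" using 2 kV a unfolding flip_def by auto
    ultimately show ?thesis using zero k by auto
  next
    case 3
    have "(k \<in> a) = False" "(k \<in> b) = False" using 3 a b by auto
    then have "k = j" using 3 k unfolding x_def y_def by (auto simp: flip_mem)
    have "flip x {i,k} = a \<union> flip P {j}" unfolding set_eq_iff x_def using 3 \<open>k = j\<close> a D by (auto simp: flip_mem)
    then show ?thesis using k by auto
  qed
qed

lemma ind01: "indicator_sig R x = 0 \<or> indicator_sig R x = 1"
  by (simp add: indicator_sig_def)

lemma dm_terraced: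
  assumes dm: "delta_matroid R" and RV: "R \<subseteq> Pow V"
  shows "terraced V (indicator_sig R)"
  unfolding terraced_def
proof (intro allI impI ballI)
  fix D P i j
  assume D: "D \<subseteq> V" "P \<subseteq> D" "i \<in> D" "j \<in> D"
    and z: "\<forall>y\<in>Pow (V - D). pinning (indicator_sig R) P y = 0"
  let ?S = "Pow (V - D)"
  let ?G = "pinning (indicator_sig R) (flip P {i})"
  let ?H = "pinning (indicator_sig R) (flip P {j})"
  show "lin_dep_on ?S ?G ?H"
  proof (cases "i = j")
    case True then show ?thesis unfolding lin_dep_on_def by (intro exI[of _ 1]) auto
  next
    case False
    have zero: "\<forall>y\<in>Pow(V-D). y \<union> P \<notin> R"
      using z by (auto simp: pinning_def indicator_sig_def split: if_splits)
    have c1: "a \<union> flip P {j} \<in> R" if "a \<in> ?S" "a \<union> flip P {i} \<in> R" "b \<in> ?S" "b \<union> flip P {j} \<in> R" for a b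
      using dm_claim[OF dm RV D False zero] that by auto
    have c2: "a \<union> flip P {i} \<in> R" if "a \<in> ?S" "a \<union> flip P {j} \<in> R" "b \<in> ?S" "b \<union> flip P {i} \<in> R" for a b
      using dm_claim[OF dm RV D(1,2,4,3) _ zero] False that by auto
    show ?thesis
    proof (cases "\<forall>a\<in>?S. a \<union> flip P {i} \<notin> R")
      case True
      then show ?thesis unfolding lin_dep_on_def
        by (intro exI[of _ 0]) (auto simp: pinning_def indicator_sig_def)
    next
      case nG: False
      show ?thesis
      proof (cases "\<forall>a\<in>?S. a \<union> flip P {j} \<notin> R")
        case True
        then show ?thesis unfolding lin_dep_on_def
          by (intro exI[of _ 0]) (auto simp: pinning_def indicator_sig_def)
      next
        case False
        then obtain b where b: "b \<in> ?S" "b \<union> flip P {j} \<in> R" by blast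
        from nG obtain b' where b': "b' \<in> ?S" "b' \<union> flip P {i} \<in> R" by blast
        have "\<forall>y\<in>?S. ?G y = 1 * ?H y"
          using c1[OF _ _ b] c2[OF _ _ b'] by (auto simp: pinning_def indicator_sig_def)
        then show ?thesis unfolding lin_dep_on_def by blast
      qed
    qed
  qed
qed


lemma terraced_dm_aux:
  assumes T: "terraced V (indicator_sig R)" and RV: "R \<subseteq> Pow V" and fin: "finite V"
  shows "x \<in> R \<Longrightarrow> y \<in> R \<Longrightarrow> (i\<in>x) \<noteq> (i\<in>y) \<Longrightarrow>
     \<exists>j. (j \<in> x) \<noteq> (j \<in> y) \<and> flip x {i, j} \<in> R"
proof (induction "card (flip x y)" arbitrary: y rule: less_induct)
  case less
  define \<Delta> where "\<Delta> = flip x y"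
  have xV: "x \<subseteq> V" "y \<subseteq> V" using less.prems RV by auto
  have DV: "\<Delta> \<subseteq> V" using xV unfolding \<Delta>_def by (auto simp: flip_mem)
  have iD: "i \<in> \<Delta>" using less.prems unfolding \<Delta>_def by (auto simp: flip_mem)
  show ?case
  proof (cases "\<Delta> = {i}")
    case True
    have "flip x {i,i} = y" using True unfolding \<Delta>_def set_eq_iff by (auto simp: flip_mem)
    then show ?thesis using less.prems by auto
  next
    case False
    then obtain j where j: "j \<in> \<Delta>" "j \<noteq> i" using iD by blast
    define D where "D = (V - \<Delta>) \<union> {i,j}"
    define P where "P = flip x {i} \<inter> D"
    have jx: "(j \<in> x) \<noteq> (j \<in> y)" using j unfolding \<Delta>_def by (auto simp: flip_mem)
    have DsV: "D \<subseteq> V" using DV iD j unfolding D_def by auto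
    show ?thesis
    proof (cases "\<forall>z\<in>Pow (V-D). z \<union> P \<notin> R")
      case False
      then obtain z where z: "z \<subseteq> V - D" "z \<union> P \<in> R" by auto
      define w where "w = z \<union> P"
      have wsub: "flip x w \<subseteq> \<Delta> - {j}"
      proof
        fix k assume kk: "k \<in> flip x w"
        have zk: "k \<in> z \<Longrightarrow> k \<in> V \<and> k \<notin> D" using z by auto
        have xk: "k \<in> x \<Longrightarrow> k \<in> V" using xV by auto
        show "k \<in> \<Delta> - {j}"
          using kk zk xk j iD unfolding w_def P_def D_def \<Delta>_def by (auto simp: flip_mem)
      qed
      have iz: "i \<notin> z" using z unfolding D_def by auto
      have iw: "(i\<in>x) \<noteq> (i\<in>w)" unfolding w_def P_def D_def using iz by (auto simp: flip_mem)
      have ps: "flip x w \<subset> flip x y" using wsub j unfolding \<Delta>_def by blast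
      have fD: "finite (flip x y)" using DV fin finite_subset unfolding \<Delta>_def by blast
      have "card (flip x w) < card (flip x y)" using psubset_card_mono[OF fD ps] .
      then obtain k where k: "(k \<in> x) \<noteq> (k \<in> w)" "flip x {i, k} \<in> R"
        using less.hyps[of w] z iw less.prems(1) unfolding w_def by blast
      have "k \<in> \<Delta>" using k(1) wsub by (auto simp: flip_mem)
      then have "(k \<in> x) \<noteq> (k \<in> y)" unfolding \<Delta>_def by (auto simp: flip_mem)
      then show ?thesis using k by blast
    next
      case True
      have PD: "P \<subseteq> D" unfolding P_def by auto
      have iD': "i \<in> D" "j \<in> D" unfolding D_def by auto
      have z: "\<forall>z\<in>Pow (V-D). pinning (indicator_sig R) P z = 0"
        using True by (auto simp: pinning_def indicator_sig_def)
      have ld: "lin_dep_on (Pow (V-D)) (pinning (indicator_sig R) (flip P {i}))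
             (pinning (indicator_sig R) (flip P {j}))"
        using T[unfolded terraced_def, rule_format, OF DsV PD iD'(1) iD'(2)] z by blast
      have e1: "flip P {i} = x \<inter> D" using iD' unfolding P_def set_eq_iff by (auto simp: flip_mem)
      have e2: "flip P {j} = flip x {i,j} \<inter> D" using iD' j unfolding P_def set_eq_iff by (auto simp: flip_mem)
      have e3: "y \<inter> D = flip x {i,j} \<inter> D"
        using j iD less.prems(3) jx unfolding D_def \<Delta>_def set_eq_iff by (auto simp: flip_mem)
      define z0 where "z0 = x - D"
      define z1 where "z1 = y - D"
      have z0S: "z0 \<in> Pow (V-D)" "z1 \<in> Pow (V-D)" using xV unfolding z0_def z1_def by auto
      have G0: "pinning (indicator_sig R) (flip P {i}) z0 = 1"
      proof -
        have "z0 \<union> flip P {i} = x" unfolding e1 z0_def by auto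
        then show ?thesis using less.prems(1) by (simp add: pinning_def indicator_sig_def)
      qed
      have H1: "pinning (indicator_sig R) (flip P {j}) z1 = 1"
      proof -
        have "z1 \<union> flip P {j} = y" unfolding e2 e3[symmetric] z1_def by auto
        then show ?thesis using less.prems(2) by (simp add: pinning_def indicator_sig_def)
      qed
      have H0: "pinning (indicator_sig R) (flip P {j}) z0 = 1"
      proof -
        from ld obtain c where
          c: "(\<forall>y\<in>Pow (V-D). pinning (indicator_sig R) (flip P {i}) y = c * pinning (indicator_sig R) (flip P {j}) y)
           \<or> (\<forall>y\<in>Pow (V-D). pinning (indicator_sig R) (flip P {j}) y = c * pinning (indicator_sig R) (flip P {i}) y)"
          unfolding lin_dep_on_def by blast
        have b0: "pinning (indicator_sig R) Q z = 0 \<or> pinning (indicator_sig R) Q z = 1" for Q z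
          by (simp add: pinning_def indicator_sig_def)
        from c show ?thesis
        proof
          assume h: "\<forall>y\<in>Pow (V-D). pinning (indicator_sig R) (flip P {i}) y = c * pinning (indicator_sig R) (flip P {j}) y"
          have "pinning (indicator_sig R) (flip P {j}) z0 \<noteq> 0" using h z0S G0 by force
          then show ?thesis using b0 by blast
        next
          assume h: "\<forall>y\<in>Pow (V-D). pinning (indicator_sig R) (flip P {j}) y = c * pinning (indicator_sig R) (flip P {i}) y"
          have "c * pinning (indicator_sig R) (flip P {i}) z1 = 1" using h z0S H1 by force
          then have "c = 1" using b0[of "flip P {i}" z1] by auto
          then show ?thesis using h z0S G0 by auto
        qed
      qed
      have "z0 \<union> flip P {j} = flip x {i,j}"
        unfolding e2 z0_def set_eq_iff using iD' by (auto simp: flip_mem)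
      then have "flip x {i,j} \<in> R" using H0
        by (simp add: pinning_def indicator_sig_def split: if_splits)
      then show ?thesis using jx by blast
    qed
  qed
qed

theorem mainTheorem11:
  fixes V :: "'a set" and R :: "'a set set"
  assumes "finite V" and "R \<subseteq> Pow V"
  shows "delta_matroid R \<longleftrightarrow> terraced V (indicator_sig R)"
proof
  assume "delta_matroid R" then show "terraced V (indicator_sig R)"
    using dm_terraced assms by blast
next
  assume "terraced V (indicator_sig R)"
  then show "delta_matroid R" unfolding delta_matroid_def
    using terraced_dm_aux[OF _ assms(2,1)] by blast
qed

end
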